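(* For every activity-breaking channel $\mathcal P$ on $S$, the inclusion $\mathcal P(\mathsf P(S))\subseteq\mathsf P(S)$ is strict; that is, there is no activity-breaking channel with $\mathcal P(\mathsf P(S))=\mathsf P(S)$. In particular no activity-breaking channel satisfies $\mathcal P(\tau)=\tau$ for all $\tau\in\mathsf P(S)$.
   Context: $S$ is a $d$-dimensional quantum system ($d\ge2$) with non-degenerate Hamiltonian $H=\sum_i E_i|i\rangle\langle i|$, $E_1<\dots<E_d$. $\mathsf{St}(S)$ is the set of density matrices; $\mathsf P(S)$ is the set of passive states, i.e. states $\sum_ip_i|i\rangle\langle i|$ with $p_1\ge\dots\ge p_d$. A quantum channel $\mathcal P$ is activity breaking if $\mathcal P(\rho)\in\mathsf P(S)$ for every $\rho\in\mathsf{St}(S)$. *)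

theory Defs
  imports "Jordan_Normal_Form.Schur_Decomposition"
begin

definition msum :: "nat \<Rightarrow> complex mat list \<Rightarrow> complex mat" where
  "msum d Ms = foldr (+) Ms (0\<^sub>m d d)"

definition mtrace :: "complex mat \<Rightarrow> complex" where
  "mtrace A = (\<Sum>i<dim_row A. A $$ (i, i))"

definition psd :: "nat \<Rightarrow> complex mat \<Rightarrow> bool" where
  "psd d A \<longleftrightarrow> A \<in> carrier_mat d d \<and>
     (\<forall>v \<in> carrier_vec d. Im (conjugate v \<bullet> (A *\<^sub>v v)) = 0 \<and> Re (conjugate v \<bullet> (A *\<^sub>v v)) \<ge> 0)"

definition states :: "nat \<Rightarrow> complex mat set" where
  "states d = {\<rho>. psd d \<rho> \<and> mtrace \<rho> = 1}"

(* P(S): passive states; the energy eigenbasis |1>,...,|d> (E_1 < ... < E_d)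
   is identified with the standard basis e_0,...,e_{d-1}. *)
definition passive_states :: "nat \<Rightarrow> complex mat set" where
  "passive_states d = {\<rho> \<in> states d. \<exists>p :: nat \<Rightarrow> real.
      (\<forall>i j. i \<le> j \<longrightarrow> j < d \<longrightarrow> p j \<le> p i) \<and>
      \<rho> = mat_diag d (\<lambda>i. complex_of_real (p i))}"

definition quantum_channel :: "nat \<Rightarrow> (complex mat \<Rightarrow> complex mat) \<Rightarrow> bool" where
  "quantum_channel d \<Phi> \<longleftrightarrow> (\<exists>Ks :: complex mat list.
      (\<forall>K \<in> set Ks. K \<in> carrier_mat d d) \<and>
      msum d (map (\<lambda>K. mat_adjoint K * K) Ks) = 1\<^sub>m d \<and>
      (\<forall>\<rho> \<in> carrier_mat d d. \<Phi> \<rho> = msum d (map (\<lambda>K. K * \<rho> * mat_adjoint K) Ks)))"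

definition activity_breaking :: "nat \<Rightarrow> (complex mat \<Rightarrow> complex mat) \<Rightarrow> bool" where
  "activity_breaking d \<Phi> \<longleftrightarrow> quantum_channel d \<Phi> \<and> (\<forall>\<rho> \<in> states d. \<Phi> \<rho> \<in> passive_states d)"

end

theory Submission imports Defs begin

lemma diag_mult_vec: assumes v: "v \<in> carrier_vec d"
  shows "mat_diag d f *\<^sub>v v = vec d (\<lambda>i. f i * v $ i)"
proof (rule eq_vecI)
  fix i assume "i < dim_vec (vec d (\<lambda>i. f i * v $ i))"
  then have i: "i < d" by simp
  have "(mat_diag d f *\<^sub>v v) $ i = (\<Sum>k\<in>{0..<d}. (if i = k then f k else 0) * v $ k)"
    using i v by (simp add: mat_diag_def scalar_prod_def row_def)
  also have "\<dots> = (\<Sum>k\<in>{0..<d}. if k = i then f i * v $ i else 0)" by (rule sum.cong) auto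
  also have "\<dots> = f i * v $ i" using i by simp
  finally show "(mat_diag d f *\<^sub>v v) $ i = vec d (\<lambda>i. f i * v $ i) $ i" using i by simp
qed (use v in \<open>simp add: mat_diag_def\<close>)

lemma sq_cnj: "(complex_of_real (cmod z))^2 = z * cnj z"
  by (metis complex_norm_square of_real_power)

lemma diag_quad: assumes v: "v \<in> carrier_vec d"
  shows "conjugate v \<bullet> (mat_diag d f *\<^sub>v v) = (\<Sum>i<d. f i * complex_of_real ((cmod (v $ i))^2))"
  using v by (simp add: diag_mult_vec scalar_prod_def lessThan_atLeast0 sq_cnj mult_ac)

lemma mtrace_diag: "mtrace (mat_diag d f) = (\<Sum>i<d. f i)"
  by (simp add: mtrace_def mat_diag_def)

lemma diag_states: assumes "\<forall>i<d. c i \<ge> 0" "(\<Sum>i<d. c i) = 1"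
  shows "mat_diag d (\<lambda>i. complex_of_real (c i)) \<in> states d"
proof -
  have "psd d (mat_diag d (\<lambda>i. complex_of_real (c i)))"
    unfolding psd_def
  proof (intro conjI ballI)
    fix v :: "complex vec" assume v: "v \<in> carrier_vec d"
    have e: "conjugate v \<bullet> (mat_diag d (\<lambda>i. complex_of_real (c i)) *\<^sub>v v) = complex_of_real (\<Sum>i<d. c i * (cmod (v $ i))^2)"
      using diag_quad[OF v] by simp
    show "Im (conjugate v \<bullet> (mat_diag d (\<lambda>i. complex_of_real (c i)) *\<^sub>v v)) = 0" unfolding e by simp
    show "Re (conjugate v \<bullet> (mat_diag d (\<lambda>i. complex_of_real (c i)) *\<^sub>v v)) \<ge> 0" unfolding e
      using assms(1) by (auto intro!: sum_nonneg)
  qed simp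
  moreover have "mtrace (mat_diag d (\<lambda>i. complex_of_real (c i))) = 1"
    unfolding mtrace_diag using assms(2) by (metis of_real_1 of_real_sum)
  ultimately show ?thesis by (simp add: states_def)
qed

lemma diag_passive: assumes "\<forall>i<d. c i \<ge> 0" "(\<Sum>i<d. c i) = 1" "\<forall>i j. i \<le> j \<longrightarrow> j < d \<longrightarrow> c j \<le> c i"
  shows "mat_diag d (\<lambda>i. complex_of_real (c i)) \<in> passive_states d"
  using diag_states[OF assms(1,2)] assms(3) unfolding passive_states_def by blast

lemma passive_facts: assumes "\<rho> \<in> passive_states d"
  obtains p where "\<forall>i j. i \<le> j \<longrightarrow> j < d \<longrightarrow> p j \<le> p i"
    "\<rho> = mat_diag d (\<lambda>i. complex_of_real (p i))" "(\<Sum>i<d. p i) = 1" "\<forall>i<d. p i \<ge> 0"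
proof -
  obtain p where p: "\<forall>i j. i \<le> j \<longrightarrow> j < d \<longrightarrow> p j \<le> p i"
    "\<rho> = mat_diag d (\<lambda>i. complex_of_real (p i))" and st: "psd d \<rho>" "mtrace \<rho> = 1"
    using assms unfolding passive_states_def states_def by blast
  have "complex_of_real (\<Sum>i<d. p i) = 1" using st(2) p(2) mtrace_diag by simp
  then have s: "(\<Sum>i<d. p i) = 1" by (metis of_real_eq_1_iff)
  have nn: "\<forall>i<d. p i \<ge> 0"
  proof (intro allI impI)
    fix i assume i: "i < d"
    have u: "unit_vec d i \<in> carrier_vec d" by simp
    have "conjugate (unit_vec d i) \<bullet> (\<rho> *\<^sub>v unit_vec d i) = (\<Sum>k<d. complex_of_real (p k) * complex_of_real ((cmod (unit_vec d i $ k))^2))"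
      using diag_quad[OF u] p(2) by simp
    also have "\<dots> = (\<Sum>k<d. if k = i then complex_of_real (p k) else 0)"
      by (intro sum.cong refl) (simp add: unit_vec_def)
    also have "\<dots> = complex_of_real (p i)" using i by simp
    finally show "p i \<ge> 0" using st(1) u unfolding psd_def by (metis Re_complex_of_real)
  qed
  show ?thesis using that p s nn by blast
qed

lemma adj_carrier: "K \<in> carrier_mat d d \<Longrightarrow> mat_adjoint K \<in> carrier_mat d d"
  unfolding mat_adjoint_def by auto

lemma adj_index: "K \<in> carrier_mat d d \<Longrightarrow> i < d \<Longrightarrow> j < d \<Longrightarrow> mat_adjoint K $$ (i,j) = cnj (K $$ (j,i))"
  unfolding mat_adjoint_def by (auto simp: mat_of_rows_def)

lemma msum_carrier: "(\<forall>M\<in>set Ms. M \<in> carrier_mat d d) \<Longrightarrow> msum d Ms \<in> carrier_mat d d"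
  by (induction Ms) (auto simp: msum_def)

lemma msum_index: "(\<forall>M\<in>set Ms. M \<in> carrier_mat d d) \<Longrightarrow> i < d \<Longrightarrow> j < d \<Longrightarrow>
   msum d Ms $$ (i,j) = (\<Sum>M\<leftarrow>Ms. M $$ (i,j))"
proof (induction Ms)
  case Nil then show ?case by (simp add: msum_def)
next
  case (Cons M Ms)
  have "msum d Ms \<in> carrier_mat d d" using Cons.prems msum_carrier by auto
  then show ?case using Cons by (simp add: msum_def)
qed

lemma kraus_term: assumes K: "K \<in> carrier_mat d d" and j: "j < d"
  shows "(K * mat_diag d c * mat_adjoint K) $$ (j,j) = (\<Sum>a<d. c a * complex_of_real ((cmod (K $$ (j,a)))^2))"
proof -
  have "K * mat_diag d c = mat d d (\<lambda>(i,j). K $$ (i,j) * c j)"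
    using mat_diag_mult_right[OF K] .
  then have "(K * mat_diag d c * mat_adjoint K) $$ (j,j) = (\<Sum>a<d. K $$ (j,a) * c a * cnj (K $$ (j,a)))"
    using K j adj_carrier[OF K] adj_index[OF K]
    by (auto simp: scalar_prod_def lessThan_atLeast0 intro!: sum.cong)
  also have "\<dots> = (\<Sum>a<d. c a * complex_of_real ((cmod (K $$ (j,a)))^2))"
    by (intro sum.cong refl) (simp only: complex_norm_square mult_ac)
  finally show ?thesis .
qed

lemma swap_sum_list: "(\<Sum>K\<leftarrow>Ks. \<Sum>a\<in>A. g K a) = (\<Sum>a\<in>A. \<Sum>K\<leftarrow>Ks. g K a)"
  by (induction Ks) (auto simp: sum.distrib)

lemma of_real_sum_list_mult: "(\<Sum>K\<leftarrow>Ks. complex_of_real c * complex_of_real (h K)) = complex_of_real (c * (\<Sum>K\<leftarrow>Ks. h K))"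
  by (induction Ks) (auto simp: algebra_simps)

lemma kraus_diag:
  assumes Ks: "\<forall>K\<in>set Ks. K \<in> carrier_mat d d" and j: "j < d"
  shows "msum d (map (\<lambda>K. K * mat_diag d (\<lambda>i. complex_of_real (c i)) * mat_adjoint K) Ks) $$ (j,j)
     = complex_of_real (\<Sum>a<d. c a * (\<Sum>K\<leftarrow>Ks. (cmod (K $$ (j,a)))^2))"
proof -
  have car: "\<forall>M\<in>set (map (\<lambda>K. K * mat_diag d (\<lambda>i. complex_of_real (c i)) * mat_adjoint K) Ks). M \<in> carrier_mat d d"
  proof
    fix M assume "M \<in> set (map (\<lambda>K. K * mat_diag d (\<lambda>i. complex_of_real (c i)) * mat_adjoint K) Ks)"
    then obtain K where K: "K \<in> set Ks" "M = K * mat_diag d (\<lambda>i. complex_of_real (c i)) * mat_adjoint K" by auto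
    have Kc: "K \<in> carrier_mat d d" using K(1) Ks by blast
    show "M \<in> carrier_mat d d" unfolding K(2)
      by (rule mult_carrier_mat[OF mult_carrier_mat[OF Kc mat_diag_dim] adj_carrier[OF Kc]])
  qed
  have "msum d (map (\<lambda>K. K * mat_diag d (\<lambda>i. complex_of_real (c i)) * mat_adjoint K) Ks) $$ (j,j)
     = (\<Sum>K\<leftarrow>Ks. (K * mat_diag d (\<lambda>i. complex_of_real (c i)) * mat_adjoint K) $$ (j,j))"
    using msum_index[OF car j j] unfolding map_map o_def .
  also have "\<dots> = (\<Sum>K\<leftarrow>Ks. \<Sum>a<d. complex_of_real (c a) * complex_of_real ((cmod (K $$ (j, a)))\<^sup>2))"
    by (intro arg_cong[where f=sum_list] map_cong refl) (use Ks j in \<open>simp only: kraus_term\<close>)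
  also have "\<dots> = (\<Sum>a<d. \<Sum>K\<leftarrow>Ks. complex_of_real (c a) * complex_of_real ((cmod (K $$ (j, a)))\<^sup>2))"
    by (rule swap_sum_list)
  also have "\<dots> = (\<Sum>a<d. complex_of_real (c a * (\<Sum>K\<leftarrow>Ks. (cmod (K $$ (j,a)))^2)))"
    by (simp only: of_real_sum_list_mult)
  also have "\<dots> = complex_of_real (\<Sum>a<d. c a * (\<Sum>K\<leftarrow>Ks. (cmod (K $$ (j,a)))^2))"
    by (rule of_real_sum[symmetric])
  finally show ?thesis .
qed

lemma first_pos: fixes p :: "nat \<Rightarrow> real" and d :: nat assumes "0 < d" "\<forall>i j. i \<le> j \<longrightarrow> j < d \<longrightarrow> p j \<le> p i" "(\<Sum>i<d. p i) = (1::real)"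
  shows "p 0 > 0"
proof -
  have "(\<Sum>i<d. p i) \<le> (\<Sum>i<d. p 0)"
  proof (rule sum_mono)
    fix i assume "i \<in> {..<d}"
    then show "p i \<le> p 0" using assms(2)[rule_format, of 0 i] by simp
  qed
  then have "1 \<le> real d * p 0" using assms(3) by simp
  show ?thesis
  proof (rule ccontr)
    assume "\<not> p 0 > 0"
    then have "real d * p 0 \<le> 0" by (intro mult_nonneg_nonpos) auto
    then show False using \<open>1 \<le> real d * p 0\<close> by simp
  qed
qed

theorem mainTheorem17:
  fixes d :: nat and \<Phi> :: "complex mat \<Rightarrow> complex mat"
  assumes "d \<ge> 2" and "activity_breaking d \<Phi>"
  shows "\<Phi> ` passive_states d \<subset> passive_states d \<and> \<not> (\<forall>\<tau> \<in> passive_states d. \<Phi> \<tau> = \<tau>)"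
proof -
  obtain Ks where Ks: "\<forall>K\<in>set Ks. K \<in> carrier_mat d d"
    and Phi: "\<forall>\<rho>\<in>carrier_mat d d. \<Phi> \<rho> = msum d (map (\<lambda>K. K * \<rho> * mat_adjoint K) Ks)"
    using assms(2) unfolding activity_breaking_def quantum_channel_def by blast
  have AB: "\<forall>\<rho>\<in>states d. \<Phi> \<rho> \<in> passive_states d"
    using assms(2) unfolding activity_breaking_def by blast
  define w where "w j a = (\<Sum>K\<leftarrow>Ks. (cmod (K $$ (j,a)))^2)" for j a
  have wnn: "w j a \<ge> 0" for j a unfolding w_def by (induction Ks) auto
  have PhiD: "\<Phi> (mat_diag d (\<lambda>i. complex_of_real (c i))) $$ (j,j) = complex_of_real (\<Sum>a<d. c a * w j a)"
    if "j < d" for c j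
    using Phi kraus_diag[OF Ks that, of c] unfolding w_def by simp
  have sub: "\<Phi> ` passive_states d \<subseteq> passive_states d"
  proof -
    have "passive_states d \<subseteq> states d" unfolding passive_states_def by blast
    then show ?thesis using AB by blast
  qed
  have dpos: "0 < d" using assms(1) by simp
  have wcol: "(\<forall>i j. i \<le> j \<longrightarrow> j < d \<longrightarrow> w j a \<le> w i a) \<and> (\<Sum>j<d. w j a) = 1" if a: "a < d" for a
  proof -
    define c where "c i = (if i = a then 1 else (0::real))" for i
    have st: "mat_diag d (\<lambda>i. complex_of_real (c i)) \<in> states d"
      using a by (intro diag_states) (auto simp: c_def)
    obtain q where q: "\<forall>i j. i \<le> j \<longrightarrow> j < d \<longrightarrow> q j \<le> q i"
      "\<Phi> (mat_diag d (\<lambda>i. complex_of_real (c i))) = mat_diag d (\<lambda>i. complex_of_real (q i))" "(\<Sum>i<d. q i) = 1"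
      using passive_facts[OF AB[rule_format, OF st]] by metis
    have qw: "q j = w j a" if j: "j < d" for j
    proof -
      have "complex_of_real (q j) = complex_of_real (\<Sum>b<d. c b * w j b)"
        using PhiD[OF j, of c] q(2) j by (simp add: mat_diag_def)
      also have "(\<Sum>b<d. c b * w j b) = (\<Sum>b<d. if b = a then w j a else 0)"
        by (rule sum.cong) (auto simp: c_def)
      also have "\<dots> = w j a" using a by simp
      finally show ?thesis by simp
    qed
    have "(\<Sum>j<d. w j a) = (\<Sum>j<d. q j)" by (rule sum.cong) (auto simp: qw)
    then show ?thesis using q qw by auto
  qed
  have W1: "w 0 a \<le> 1" if "a < d" for a
  proof -
    have "w 0 a \<le> (\<Sum>j<d. w j a)" using dpos wnn by (intro member_le_sum) auto
    then show ?thesis using wcol[OF that] by simp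
  qed
  have W2: "real d * w (d-1) a \<le> 1" if "a < d" for a
  proof -
    have "(\<Sum>j<d. w (d-1) a) \<le> (\<Sum>j<d. w j a)" using wcol[OF that] by (intro sum_mono) auto
    then show ?thesis using wcol[OF that] by simp
  qed
  have neq: "\<Phi> ` passive_states d \<noteq> passive_states d"
  proof
    assume eq: "\<Phi> ` passive_states d = passive_states d"
    define e where "e i = (if i = 0 then 1 else (0::real))" for i :: nat
    have "mat_diag d (\<lambda>i. complex_of_real (e i)) \<in> passive_states d"
      using dpos by (intro diag_passive) (auto simp: e_def)
    then obtain \<rho> where \<rho>: "\<rho> \<in> passive_states d" "\<Phi> \<rho> = mat_diag d (\<lambda>i. complex_of_real (e i))"
      using eq by (metis imageE)
    obtain p where p: "\<forall>i j. i \<le> j \<longrightarrow> j < d \<longrightarrow> p j \<le> p i"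
      "\<rho> = mat_diag d (\<lambda>i. complex_of_real (p i))" "(\<Sum>i<d. p i) = 1" "\<forall>i<d. p i \<ge> 0"
      using passive_facts[OF \<rho>(1)] by metis
    have "complex_of_real (\<Sum>a<d. p a * w 0 a) = 1"
      using PhiD[OF dpos, of p] \<rho>(2) p(2) dpos by (simp add: mat_diag_def e_def)
    then have s1: "(\<Sum>a<d. p a * w 0 a) = 1" by (metis of_real_eq_1_iff)
    have "(\<Sum>a<d. p a * (1 - w 0 a)) = (\<Sum>a<d. p a) - (\<Sum>a<d. p a * w 0 a)"
      by (simp add: algebra_simps sum_subtractf)
    then have "(\<Sum>a<d. p a * (1 - w 0 a)) = 0" using s1 p(3) by simp
    moreover have "\<forall>a\<in>{..<d}. p a * (1 - w 0 a) \<ge> 0" using p(4) W1 by auto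
    ultimately have "\<forall>a\<in>{..<d}. p a * (1 - w 0 a) = 0"
      using sum_nonneg_eq_0_iff[of "{..<d}" "\<lambda>a. p a * (1 - w 0 a)"] by simp
    then have "p 0 * (1 - w 0 0) = 0" using dpos by simp
    moreover have "p 0 > 0" using first_pos[OF dpos p(1) p(3)] .
    ultimately have w00: "w 0 0 = 1" by simp
    have "(\<Sum>j\<in>{0, d-1}. w j 0) \<le> (\<Sum>j<d. w j 0)"
      using dpos wnn by (intro sum_mono2) auto
    then have "w 0 0 + w (d-1) 0 \<le> 1" using assms(1) wcol[OF dpos] by simp
    then have wd0: "w (d-1) 0 = 0" using w00 wnn[of "d-1" 0] by simp
    define u where "u i = 1 / real d" for i :: nat
    have "mat_diag d (\<lambda>i. complex_of_real (u i)) \<in> passive_states d"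
      using dpos by (intro diag_passive) (auto simp: u_def)
    then obtain \<rho>' where \<rho>': "\<rho>' \<in> passive_states d" "\<Phi> \<rho>' = mat_diag d (\<lambda>i. complex_of_real (u i))"
      using eq by (metis imageE)
    obtain p' where p': "\<forall>i j. i \<le> j \<longrightarrow> j < d \<longrightarrow> p' j \<le> p' i"
      "\<rho>' = mat_diag d (\<lambda>i. complex_of_real (p' i))" "(\<Sum>i<d. p' i) = 1" "\<forall>i<d. p' i \<ge> 0"
      using passive_facts[OF \<rho>'(1)] by metis
    have dm: "d - 1 < d" using dpos by simp
    have "complex_of_real (\<Sum>a<d. p' a * w (d-1) a) = complex_of_real (1 / real d)"
      using PhiD[OF dm, of p'] \<rho>'(2) p'(2) dm by (simp add: mat_diag_def u_def)
    then have s2: "(\<Sum>a<d. p' a * w (d-1) a) = 1 / real d" by (metis of_real_eq_iff)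
    have "(\<Sum>a<d. p' a * (1 / real d - w (d-1) a)) = (\<Sum>a<d. p' a) / real d - (\<Sum>a<d. p' a * w (d-1) a)"
      by (simp add: algebra_simps sum_subtractf sum_divide_distrib)
    then have "(\<Sum>a<d. p' a * (1 / real d - w (d-1) a)) = 0" using s2 p'(3) by simp
    moreover have "\<forall>a\<in>{..<d}. p' a * (1 / real d - w (d-1) a) \<ge> 0"
    proof
      fix a assume "a \<in> {..<d}"
      then have "p' a \<ge> 0" "real d * w (d-1) a \<le> 1" using p'(4) W2 by auto
      moreover have "w (d-1) a \<le> 1 / real d" using \<open>real d * w (d-1) a \<le> 1\<close> dpos
        by (simp add: field_simps)
      ultimately show "p' a * (1 / real d - w (d-1) a) \<ge> 0" by simp
    qed
    ultimately have "\<forall>a\<in>{..<d}. p' a * (1 / real d - w (d-1) a) = 0"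
      using sum_nonneg_eq_0_iff[of "{..<d}" "\<lambda>a. p' a * (1 / real d - w (d-1) a)"] by simp
    then have "p' 0 * (1 / real d - w (d-1) 0) = 0" using dpos by simp
    moreover have "p' 0 > 0" using first_pos[OF dpos p'(1) p'(3)] .
    ultimately show False using wd0 dpos by simp
  qed
  have "\<not> (\<forall>\<tau> \<in> passive_states d. \<Phi> \<tau> = \<tau>)"
  proof
    assume "\<forall>\<tau> \<in> passive_states d. \<Phi> \<tau> = \<tau>"
    then have "\<Phi> ` passive_states d = passive_states d" by simp
    then show False using neq by simp
  qed
  then show ?thesis using sub neq by blast
qed

end
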